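(* For $d\in\mathbb{N}_1$ let $\pi^+_d:=\sum_{n\in\mathcal{N}^g,\ \ell(n)\le d}\pi(n)$. Then the expected number of node expansions of $\mathrm{LubyTS}(\infty,1)$ before (and including) reaching a node of $\mathcal{N}^g$ satisfies $$\mathbb{E}\bigl[N(\mathrm{LubyTS}(\infty,1),\mathcal{N}^g)\bigr]\le \min_{d\in\mathbb{N}_1,\ \pi^+_d>0}\ d+\frac{d}{\pi^+_d}\left(\log_2\frac{d}{\pi^+_d}+6.1\right).$$
   Context: Setting: a finite action set $\mathcal{A}$, a set of states $\mathcal{S}$ with initial state $s_0$, a deterministic transition function $T:\mathcal{S}\times\mathcal{A}\to\mathcal{S}$, and a set of goal states $\mathcal{G}\subseteq\mathcal{S}$. Nodes are finite sequences of actions; the root $n_0$ is the empty sequence; $T(n)$ is the state reached from $s_0$ by applying the actions of $n$; for a node of $t$ actions, $\ell(n):=t+1$. A policy is a function $\pi$ from nodes to $[0,1]$ with $\pi(n_0)=1$ and $\pi(n)=\sum_{a\in\mathcal{A}}\pi(na)$, with $\pi(a\mid n)=\pi(na)/\pi(n)$. The target set $\mathcal{N}^g$ is the set of nodes $n$ with $T(n)\in\mathcal{G}$ such that no proper prefix $m$ of $n$ has $T(m)\in\mathcal{G}$. A trial of depth $D$ samples a path $m_1=n_0, m_2=m_1a_1,\dots,m_D=m_{D-1}a_{D-1}$ with $a_i\sim\pi(\cdot\mid m_i)$ and tests $m_1,m_2,\dots$ in order, each test counting as one node expansion, stopping with success at the first $m_i$ with $T(m_i)\in\mathcal{G}$.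 $\mathrm{LubyTS}(\infty,1)$ performs, for $k=1,2,3,\dots$, an independent trial of depth $f(k)$, where $f(k)$ is the largest power of $2$ dividing $k$ (OEIS A6519: $1,2,1,4,1,2,1,8,\dots$), until a success; $N(\mathrm{LubyTS}(\infty,1),\mathcal{N}^g)$ is the total number of node expansions until success. *)

theory Defs
  imports "HOL-Probability.Probability" "HOL-Computational_Algebra.Factorial_Ring"
begin

text \<open>Nodes are finite action sequences ('a list); appending an action a to node n is n @ [a].
  The action set is the finite type 'a.\<close>

definition node_state :: "('s \<Rightarrow> 'a \<Rightarrow> 's) \<Rightarrow> 's \<Rightarrow> 'a list \<Rightarrow> 's" where
  "node_state T s0 n = fold (\<lambda>a s. T s a) n s0"

definition node_level :: "'a list \<Rightarrow> nat" where
  "node_level n = length n + 1"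

definition is_policy :: "('a::finite list \<Rightarrow> real) \<Rightarrow> bool" where
  "is_policy \<pi> \<longleftrightarrow> \<pi> [] = 1 \<and> (\<forall>n. 0 \<le> \<pi> n \<and> \<pi> n \<le> 1)
     \<and> (\<forall>n. \<pi> n = (\<Sum>a\<in>UNIV. \<pi> (n @ [a])))"

definition target_set :: "('s \<Rightarrow> 'a \<Rightarrow> 's) \<Rightarrow> 's \<Rightarrow> 's set \<Rightarrow> 'a list set" where
  "target_set T s0 G = {n. node_state T s0 n \<in> G \<and>
      (\<forall>k < length n. node_state T s0 (take k n) \<notin> G)}"

definition pi_plus :: "('s \<Rightarrow> 'a \<Rightarrow> 's) \<Rightarrow> 's \<Rightarrow> 's set \<Rightarrow> ('a list \<Rightarrow> real) \<Rightarrow> nat \<Rightarrow> real" where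
  "pi_plus T s0 G \<pi> d = (\<Sum>n\<in>{n \<in> target_set T s0 G. node_level n \<le> d}. \<pi> n)"

text \<open>Conditional action distribution \<pi>(\<cdot> | n) (arbitrary where \<pi> n = 0; such nodes are
  reached with probability 0).\<close>
definition action_pmf :: "('a::finite list \<Rightarrow> real) \<Rightarrow> 'a list \<Rightarrow> 'a pmf" where
  "action_pmf \<pi> n = (if \<pi> n > 0 then embed_pmf (\<lambda>a. \<pi> (n @ [a]) / \<pi> n)
                      else pmf_of_set UNIV)"

fun path_pmf :: "('a::finite list \<Rightarrow> real) \<Rightarrow> 'a list \<Rightarrow> nat \<Rightarrow> 'a list pmf" where
  "path_pmf \<pi> n 0 = return_pmf n"
| "path_pmf \<pi> n (Suc k) = bind_pmf (action_pmf \<pi> n) (\<lambda>a. path_pmf \<pi> (n @ [a]) k)"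

text \<open>Outcome of a trial of depth D whose sampled path ends at m_D = m (length D - 1):
  the nodes m_1, ..., m_D are take 0 m, ..., take (D-1) m, tested in order.
  Result: (success?, number of node expansions).\<close>
definition trial_outcome ::
  "('s \<Rightarrow> 'a \<Rightarrow> 's) \<Rightarrow> 's \<Rightarrow> 's set \<Rightarrow> nat \<Rightarrow> 'a list \<Rightarrow> bool \<times> nat" where
  "trial_outcome T s0 G D m =
     (if \<exists>i < D. node_state T s0 (take i m) \<in> G
      then (True, Suc (LEAST i. node_state T s0 (take i m) \<in> G))
      else (False, D))"

definition trial_pmf ::
  "('s \<Rightarrow> 'a::finite \<Rightarrow> 's) \<Rightarrow> 's \<Rightarrow> 's set \<Rightarrow> ('a list \<Rightarrow> real) \<Rightarrow> nat \<Rightarrow> (bool \<times> nat) pmf" where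
  "trial_pmf T s0 G \<pi> D = map_pmf (trial_outcome T s0 G D) (path_pmf \<pi> [] (D - 1))"

text \<open>Luby sequence (OEIS A6519): largest power of 2 dividing k.\<close>
definition luby :: "nat \<Rightarrow> nat" where
  "luby k = 2 ^ multiplicity (2::nat) k"

text \<open>Probability space of LubyTS(\<infinity>,1): outcome j (j = 0,1,...) is the independent trial
  number k = j+1, of depth luby k.\<close>
definition luby_space ::
  "('s \<Rightarrow> 'a::finite \<Rightarrow> 's) \<Rightarrow> 's \<Rightarrow> 's set \<Rightarrow> ('a list \<Rightarrow> real) \<Rightarrow> (nat \<Rightarrow> bool \<times> nat) measure" where
  "luby_space T s0 G \<pi> = (\<Pi>\<^sub>M j\<in>UNIV. measure_pmf (trial_pmf T s0 G \<pi> (luby (Suc j))))"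

definition luby_expansions :: "(nat \<Rightarrow> bool \<times> nat) \<Rightarrow> ennreal" where
  "luby_expansions \<omega> =
     (if \<exists>j. fst (\<omega> j)
      then ennreal (real (\<Sum>j \<le> (LEAST j. fst (\<omega> j)). snd (\<omega> j)))
      else \<infinity>)"

definition expected_luby_expansions ::
  "('s \<Rightarrow> 'a::finite \<Rightarrow> 's) \<Rightarrow> 's \<Rightarrow> 's set \<Rightarrow> ('a list \<Rightarrow> real) \<Rightarrow> ennreal" where
  "expected_luby_expansions T s0 G \<pi> = (\<integral>\<^sup>+ \<omega>. luby_expansions \<omega> \<partial>luby_space T s0 G \<pi>)"

end

theory Submission
  imports Defs
begin

lemma pol_nonneg: "is_policy \<pi> \<Longrightarrow> 0 \<le> \<pi> n"
  unfolding is_policy_def by blast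

lemma pol_root: "is_policy \<pi> \<Longrightarrow> \<pi> [] = 1"
  unfolding is_policy_def by blast

lemma pol_step: "is_policy \<pi> \<Longrightarrow> \<pi> (n @ [a]) \<le> \<pi> n"
proof -
  assume p: "is_policy \<pi>"
  have "\<pi> n = (\<Sum>b\<in>UNIV. \<pi> (n @ [b]))" using p unfolding is_policy_def by blast
  moreover have "\<pi> (n @ [a]) \<le> (\<Sum>b\<in>UNIV. \<pi> (n @ [b]))"
    by (rule member_le_sum) (auto intro: pol_nonneg[OF p])
  ultimately show ?thesis by simp
qed

lemma pol_mono: "is_policy \<pi> \<Longrightarrow> \<pi> (n @ y) \<le> \<pi> n"
proof (induction y rule: rev_induct)
  case Nil then show ?case by simp
next
  case (snoc a y)
  then show ?case using pol_step[OF snoc(2), of "n @ y" a] by simp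
qed

lemma pmf_action:
  assumes p: "is_policy \<pi>" and pos: "\<pi> n > 0"
  shows "pmf (action_pmf \<pi> n) a = \<pi> (n @ [a]) / \<pi> n"
proof -
  have s: "\<pi> n = (\<Sum>b\<in>UNIV. \<pi> (n @ [b]))" using p unfolding is_policy_def by blast
  have "(\<Sum>b\<in>UNIV. \<pi> (n @ [b]) / \<pi> n) = 1"
    using pos s by (simp add: sum_divide_distrib[symmetric])
  then have "(\<integral>\<^sup>+ x. ennreal (\<pi> (n @ [x]) / \<pi> n) \<partial>count_space UNIV) = 1"
    by (subst nn_integral_count_space_finite) (auto simp: sum_ennreal pol_nonneg[OF p] pos)
  then have "pmf (embed_pmf (\<lambda>a. \<pi> (n @ [a]) / \<pi> n)) a = \<pi> (n @ [a]) / \<pi> n"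
    by (intro pmf_embed_pmf) (auto simp: pol_nonneg[OF p])
  then show ?thesis unfolding action_pmf_def using pos by simp
qed

lemma set_path: "m \<in> set_pmf (path_pmf \<pi> n k) \<Longrightarrow> \<exists>y. m = n @ y \<and> length y = k"
proof (induction k arbitrary: n)
  case 0 then show ?case by simp
next
  case (Suc k)
  then obtain b where "m \<in> set_pmf (path_pmf \<pi> (n @ [b]) k)" by auto
  from Suc.IH[OF this] show ?case by fastforce
qed

lemma path_prob:
  assumes p: "is_policy \<pi>"
  shows "length x \<le> k \<Longrightarrow>
    emeasure (measure_pmf (path_pmf \<pi> n k)) {m. take (length n + length x) m = n @ x} * ennreal (\<pi> n)
      = ennreal (\<pi> (n @ x))"
proof (induction k arbitrary: n x)
  case 0 then show ?case by simp
next
  case (Suc k)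
  show ?case
  proof (cases x)
    case Nil
    have st: "take (length n) m = n" if "m \<in> set_pmf (path_pmf \<pi> n (Suc k))" for m
    proof -
      from set_path[OF that] obtain y where "m = n @ y" by blast
      then show ?thesis by simp
    qed
    have "emeasure (measure_pmf (path_pmf \<pi> n (Suc k))) {m. take (length n) m = n} = 1"
      by (rule measure_pmf.emeasure_eq_1_AE) (auto simp: AE_measure_pmf_iff st)
    then show ?thesis using Nil by (simp del: path_pmf.simps)
  next
    case (Cons a x')
    let ?S = "{m. take (length n + length x) m = n @ x}"
    have z: "emeasure (measure_pmf (path_pmf \<pi> (n @ [b]) k)) ?S = 0" if "b \<noteq> a" for b
    proof -
      have "m \<notin> ?S" if m: "m \<in> set_pmf (path_pmf \<pi> (n @ [b]) k)" for m
      proof -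
        from set_path[OF m] obtain y where "m = (n @ [b]) @ y" by blast
        then have "take (length n + length x) m = n @ b # take (length x') y" using Cons by simp
        then show ?thesis using \<open>b \<noteq> a\<close> Cons by auto
      qed
      then have "set_pmf (path_pmf \<pi> (n @ [b]) k) \<inter> ?S = {}" by blast
      then show ?thesis by (simp del: path_pmf.simps add: measure_pmf.emeasure_eq_measure measure_pmf_zero_iff)
    qed
    have "emeasure (measure_pmf (path_pmf \<pi> n (Suc k))) ?S
        = (\<Sum>b\<in>UNIV. emeasure (measure_pmf (path_pmf \<pi> (n @ [b]) k)) ?S * ennreal (pmf (action_pmf \<pi> n) b))"
      unfolding path_pmf.simps emeasure_bind_pmf
      by (rule nn_integral_measure_pmf_support) auto
    also have "\<dots> = emeasure (measure_pmf (path_pmf \<pi> (n @ [a]) k)) ?S * ennreal (pmf (action_pmf \<pi> n) a)"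
      by (subst sum.remove[of UNIV a]) (simp_all add: z)
    finally have e: "emeasure (measure_pmf (path_pmf \<pi> n (Suc k))) ?S
       = emeasure (measure_pmf (path_pmf \<pi> (n @ [a]) k)) ?S * ennreal (pmf (action_pmf \<pi> n) a)" .
    have IH: "emeasure (measure_pmf (path_pmf \<pi> (n @ [a]) k)) ?S * ennreal (\<pi> (n @ [a])) = ennreal (\<pi> (n @ x))"
      using Suc.IH[of x' "n @ [a]"] Suc.prems Cons by simp
    show ?thesis
    proof (cases "\<pi> n > 0")
      case True
      have "ennreal (pmf (action_pmf \<pi> n) a) * ennreal (\<pi> n) = ennreal (pmf (action_pmf \<pi> n) a * \<pi> n)"
        by (rule ennreal_mult[symmetric]) (auto simp: pol_nonneg[OF p])
      also have "pmf (action_pmf \<pi> n) a * \<pi> n = \<pi> (n @ [a])"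
        using True by (simp add: pmf_action[OF p True])
      finally have h: "ennreal (pmf (action_pmf \<pi> n) a) * ennreal (\<pi> n) = ennreal (\<pi> (n @ [a]))" .
      have "emeasure (measure_pmf (path_pmf \<pi> n (Suc k))) ?S * ennreal (\<pi> n)
          = emeasure (measure_pmf (path_pmf \<pi> (n @ [a]) k)) ?S * (ennreal (pmf (action_pmf \<pi> n) a) * ennreal (\<pi> n))"
        unfolding e by (rule mult.assoc)
      also have "\<dots> = ennreal (\<pi> (n @ x))" unfolding h by (rule IH)
      finally show ?thesis .
    next
      case False
      then have z0: "\<pi> n = 0" using pol_nonneg[OF p, of n] by linarith
      moreover have "\<pi> (n @ x) = 0" using pol_mono[OF p, of n x] pol_nonneg[OF p, of "n @ x"] z0 by linarith
      ultimately show ?thesis by (simp del: path_pmf.simps)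
    qed
  qed
qed

lemma target_prefix:
  assumes "n1 \<in> target_set T s0 G" "n2 \<in> target_set T s0 G"
    and "take (length n1) m = n1" "take (length n2) m = n2" "length n1 \<le> length n2"
  shows "n1 = n2"
proof (cases "length n1 = length n2")
  case True then show ?thesis using assms by metis
next
  case False
  then have lt: "length n1 < length n2" using assms(5) by simp
  have "take (length n1) n2 = n1"
    using assms(3,4) lt by (metis min.absorb1 less_imp_le take_take)
  moreover have "node_state T s0 (take (length n1) n2) \<notin> G"
    using assms(2) lt unfolding target_set_def by blast
  moreover have "node_state T s0 n1 \<in> G" using assms(1) unfolding target_set_def by blast
  ultimately show ?thesis by simp
qed

lemma trial_fail:
  assumes p: "is_policy \<pi>" and dD: "d \<le> D" and d1: "1 \<le> d"
  shows "measure_pmf.prob (trial_pmf T s0 G \<pi> D) {x. \<not> fst x} \<le> 1 - pi_plus T s0 G \<pi> d"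
proof -
  define Ts where "Ts = {n \<in> target_set T s0 G. node_level n \<le> d}"
  define P where "P = path_pmf \<pi> [] (D - 1)"
  define E where "E n = {m. take (length n) m = n}" for n :: "'a list"
  define Succ where "Succ = {m. fst (trial_outcome T s0 G D m)}"
  have fin: "finite Ts"
  proof (rule finite_subset)
    show "Ts \<subseteq> {xs. set xs \<subseteq> UNIV \<and> length xs \<le> d}" unfolding Ts_def node_level_def by auto
    show "finite {xs. set xs \<subseteq> (UNIV :: 'a set) \<and> length xs \<le> d}" by (rule finite_lists_length_le) simp
  qed
  have pr: "measure_pmf.prob P (E n) = \<pi> n" if "n \<in> Ts" for n
  proof -
    have "length n \<le> D - 1" using that dD unfolding Ts_def node_level_def by auto
    from path_prob[OF p this, of "[]"]
    have "emeasure (measure_pmf P) (E n) = ennreal (\<pi> n)"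
      using p unfolding P_def E_def by (simp add: pol_root)
    then show ?thesis by (simp add: measure_pmf.emeasure_eq_measure pol_nonneg[OF p])
  qed
  have disj: "disjoint_family_on E Ts"
    unfolding disjoint_family_on_def
  proof (intro ballI impI)
    fix n1 n2 assume n: "n1 \<in> Ts" "n2 \<in> Ts" "n1 \<noteq> n2"
    show "E n1 \<inter> E n2 = {}"
    proof (rule ccontr)
      assume "E n1 \<inter> E n2 \<noteq> {}"
      then obtain m where m: "take (length n1) m = n1" "take (length n2) m = n2" unfolding E_def by auto
      have t: "n1 \<in> target_set T s0 G" "n2 \<in> target_set T s0 G" using n unfolding Ts_def by auto
      show False
      proof (cases "length n1 \<le> length n2")
        case True then show ?thesis using target_prefix[OF t m True] n by simp
      next
        case False then show ?thesis using target_prefix[OF t(2,1) m(2,1)] n by simp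
      qed
    qed
  qed
  have sub: "(\<Union>n\<in>Ts. E n) \<subseteq> Succ"
  proof
    fix m assume "m \<in> (\<Union>n\<in>Ts. E n)"
    then obtain n where n: "n \<in> Ts" "take (length n) m = n" unfolding E_def by auto
    have "length n < D" using n(1) dD unfolding Ts_def node_level_def by auto
    moreover have "node_state T s0 (take (length n) m) \<in> G"
      using n unfolding Ts_def target_set_def by auto
    ultimately show "m \<in> Succ" unfolding Succ_def trial_outcome_def by auto
  qed
  have "pi_plus T s0 G \<pi> d = (\<Sum>n\<in>Ts. measure_pmf.prob P (E n))"
    unfolding pi_plus_def Ts_def[symmetric] using pr by simp
  also have "\<dots> = measure_pmf.prob P (\<Union>n\<in>Ts. E n)"
    by (rule measure_pmf.finite_measure_finite_Union[symmetric]) (auto simp: fin disj)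
  also have "\<dots> \<le> measure_pmf.prob P Succ"
    by (rule measure_pmf.finite_measure_mono[OF sub]) simp
  finally have ge: "pi_plus T s0 G \<pi> d \<le> measure_pmf.prob P Succ" .
  have "measure_pmf.prob (trial_pmf T s0 G \<pi> D) {x. \<not> fst x}
      = measure_pmf.prob P (space (measure_pmf P) - Succ)"
    unfolding trial_pmf_def P_def[symmetric] measure_map_pmf Succ_def by (rule arg_cong[where f="measure_pmf.prob P"]) auto
  also have "\<dots> = 1 - measure_pmf.prob P Succ" by (rule measure_pmf.prob_compl) simp
  finally show ?thesis using ge by simp
qed

lemma luby_pos: "1 \<le> luby k"
  unfolding luby_def by simp

lemma luby_even: "m \<noteq> 0 \<Longrightarrow> luby (2 * m) = 2 * luby m"
  unfolding luby_def by (subst multiplicity_times_same) auto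

lemma luby_odd: "luby (Suc (2 * m)) = 1"
  unfolding luby_def by (subst not_dvd_imp_multiplicity_0) auto

lemma luby_dvd: "2 ^ b dvd k \<Longrightarrow> k \<noteq> 0 \<Longrightarrow> 2 ^ b \<le> luby k"
  unfolding luby_def by (intro power_increasing multiplicity_geI) auto

definition lsum :: "nat \<Rightarrow> real" where
  "lsum M = (\<Sum>k<M. real (luby (Suc k)))"

lemma lsum_double: "lsum (2 * m) = m + 2 * lsum m"
proof (induction m)
  case 0 then show ?case by (simp add: lsum_def)
next
  case (Suc m)
  have "lsum (2 * Suc m) = lsum (2 * m) + luby (Suc (2 * m)) + luby (2 * Suc m)"
    unfolding lsum_def by (simp add: mult_2)
  also have "\<dots> = m + 2 * lsum m + 1 + 2 * luby (Suc m)"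
    using Suc by (simp add: luby_odd luby_even del: mult_Suc_right)
  also have "\<dots> = Suc m + 2 * lsum (Suc m)" unfolding lsum_def by simp
  finally show ?case .
qed

lemma lsum_bound: "1 \<le> M \<Longrightarrow> lsum M \<le> M / 2 * log 2 M + M"
proof (induction M rule: less_induct)
  case (less M)
  show ?case
  proof (cases "M = 1")
    case True then show ?thesis by (simp add: lsum_def luby_def)
  next
    case False
    then have M2: "M \<ge> 2" using less.prems by simp
    define m where "m = M div 2"
    have m: "M = 2 * m \<or> M = Suc (2 * m)" unfolding m_def by presburger
    have m1: "m \<ge> 1" using m M2 by auto
    have IH: "lsum m \<le> m / 2 * log 2 m + m" using less.IH[of m] m m1 by auto
    have ev: "lsum (2 * m) \<le> (2 * m) / 2 * log 2 (2 * m) + 2 * m"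
    proof -
      have "log 2 (2 * real m) = 1 + log 2 m" using m1 by (simp add: log_mult_pos)
      then show ?thesis using lsum_double[of m] IH by (simp add: algebra_simps)
    qed
    show ?thesis
    proof (cases "M = 2 * m")
      case True then show ?thesis using ev by simp
    next
      case False
      then have Mo: "M = Suc (2 * m)" using m by simp
      have "lsum M = lsum (2 * m) + 1" unfolding Mo lsum_def by (simp add: luby_odd)
      also have "\<dots> \<le> (2 * m) / 2 * log 2 (2 * m) + 2 * m + 1" using ev by simp
      also have "\<dots> \<le> M / 2 * log 2 M + M"
      proof -
        have l1: "log 2 (2 * real m) \<le> log 2 M" using m1 Mo by simp
        have l0: "0 \<le> log 2 (2 * real m)" using m1 by simp
        have "(2 * m) / 2 * log 2 (2 * m) \<le> M / 2 * log 2 M"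
          by (rule mult_mono) (use l1 l0 Mo in auto)
        then show ?thesis using Mo by simp
      qed
      finally show ?thesis .
    qed
  qed
qed

lemma mem_emb_pmf:
  "\<omega> \<in> prod_emb UNIV (\<lambda>j. measure_pmf (Ms j)) J (Pi\<^sub>E J X) \<longleftrightarrow> (\<forall>i\<in>J. \<omega> i \<in> X i)"
  by (auto simp: prod_emb_def space_PiM PiE_iff)

lemma ennreal_all_nat_top: "(\<And>N. of_nat N \<le> (x::ennreal)) \<Longrightarrow> x = \<infinity>"
proof -
  assume h: "\<And>N. of_nat N \<le> (x::ennreal)"
  have "(\<Squnion>N. of_nat N :: ennreal) \<le> x" by (rule SUP_least) (rule h)
  then show ?thesis using ennreal_SUP_of_nat_eq_top by (simp add: top_unique)
qed

lemma ennreal_le_suminf: "(f :: nat \<Rightarrow> ennreal) k \<le> suminf f"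
  using sum_le_suminf[OF summableI, of "{k}" f] by simp

lemma ennreal_sum_le_suminf: "sum (f :: nat \<Rightarrow> ennreal) {..<N} \<le> suminf f"
  using sum_le_suminf[OF summableI, of "{..<N}" f] by simp

lemma step_A:
  fixes Ms :: "nat \<Rightarrow> (bool \<times> nat) pmf" and L :: "nat \<Rightarrow> nat"
  assumes L1: "\<And>k. 1 \<le> L k" and LB: "\<And>k x. x \<in> set_pmf (Ms k) \<Longrightarrow> snd x \<le> L k"
  shows "(\<integral>\<^sup>+\<omega>. luby_expansions \<omega> \<partial>(\<Pi>\<^sub>M j\<in>UNIV. measure_pmf (Ms j)))
     \<le> (\<Sum>k. of_nat (L k) * (\<Prod>j<k. emeasure (measure_pmf (Ms j)) {x. \<not> fst x}))"
proof -
  let ?M = "\<lambda>j. measure_pmf (Ms j)"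
  let ?P = "\<Pi>\<^sub>M j\<in>UNIV. ?M j"
  interpret product_prob_space ?M UNIV
    by (simp add: product_prob_space_def product_prob_space_axioms_def product_sigma_finite_def prob_space_measure_pmf prob_space_imp_sigma_finite)
  define A where "A k = prod_emb UNIV ?M {..<k} (Pi\<^sub>E {..<k} (\<lambda>_. {x. \<not> fst x}))" for k
  define B where "B k = prod_emb UNIV ?M {k} (Pi\<^sub>E {k} (\<lambda>_. {x. L k < snd x}))" for k
  have Amem: "\<omega> \<in> A k \<longleftrightarrow> (\<forall>i<k. \<not> fst (\<omega> i))" for \<omega> k
    unfolding A_def mem_emb_pmf by auto
  have Bmem: "\<omega> \<in> B k \<longleftrightarrow> L k < snd (\<omega> k)" for \<omega> k
    unfolding B_def mem_emb_pmf by auto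
  have Aset: "A k \<in> sets ?P" for k unfolding A_def by (rule sets_PiM_I) auto
  have Bset: "B k \<in> sets ?P" for k unfolding B_def by (rule sets_PiM_I) auto
  have Ameas: "emeasure ?P (A k) = (\<Prod>j<k. emeasure (?M j) {x. \<not> fst x})" for k
    unfolding A_def by (subst emeasure_PiM_emb) auto
  have Bmeas: "emeasure ?P (B k) = 0" for k
  proof -
    have "emeasure ?P (B k) = emeasure (?M k) {x. L k < snd x}"
      unfolding B_def by (subst emeasure_PiM_emb) auto
    also have "\<dots> = 0"
    proof -
      have "set_pmf (Ms k) \<inter> {x. L k < snd x} = {}" using LB[of _ k] by force
      then show ?thesis by (simp add: measure_pmf.emeasure_eq_measure measure_pmf_zero_iff)
    qed
    finally show ?thesis .
  qed
  define F :: "(nat \<Rightarrow> bool \<times> nat) \<Rightarrow> ennreal" where "F \<omega> = (\<Sum>k. of_nat (L k) * indicator (A k) \<omega> + \<infinity> * indicator (B k) \<omega>)" for \<omega>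
  have pw: "luby_expansions \<omega> \<le> F \<omega>" for \<omega>
  proof (cases "\<exists>k. L k < snd (\<omega> k)")
    case True
    then obtain k where k: "L k < snd (\<omega> k)" by blast
    have "(\<infinity>::ennreal) \<le> of_nat (L k) * indicator (A k) \<omega> + \<infinity> * indicator (B k) \<omega>"
      using k Bmem by simp
    also have "\<dots> \<le> F \<omega>" unfolding F_def by (rule ennreal_le_suminf)
    finally show ?thesis by (simp add: top_unique)
  next
    case False
    then have sb: "snd (\<omega> k) \<le> L k" for k by (simp add: not_less)
    have lowsum: "(\<Sum>k<N. of_nat (L k)) \<le> F \<omega>" if "\<And>k. k < N \<Longrightarrow> \<omega> \<in> A k" for N
    proof -
      have "(\<Sum>k<N. of_nat (L k)) = (\<Sum>k<N. of_nat (L k) * indicator (A k) \<omega> + \<infinity> * indicator (B k) \<omega> :: ennreal)"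
        using that Bmem sb by (intro sum.cong) (auto simp: not_less[symmetric])
      also have "\<dots> \<le> F \<omega>" unfolding F_def by (rule ennreal_sum_le_suminf)
      finally show ?thesis .
    qed
    show ?thesis
    proof (cases "\<exists>j. fst (\<omega> j)")
      case True
      define J where "J = (LEAST j. fst (\<omega> j))"
      have inA: "\<omega> \<in> A k" if "k < Suc J" for k
        unfolding Amem
      proof (intro allI impI)
        fix i assume "i < k"
        then have "i < J" using that by simp
        then show "\<not> fst (\<omega> i)" unfolding J_def by (rule not_less_Least)
      qed
      have "luby_expansions \<omega> = ennreal (real (\<Sum>j\<le>J. snd (\<omega> j)))"
        unfolding luby_expansions_def J_def by (rule if_P[OF True])
      also have "\<dots> = of_nat (\<Sum>j\<le>J. snd (\<omega> j))" by (simp add: ennreal_of_nat_eq_real_of_nat)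
      also have "\<dots> \<le> of_nat (\<Sum>j\<le>J. L j)" by (intro of_nat_mono sum_mono sb)
      also have "\<dots> = (\<Sum>k<Suc J. of_nat (L k))" by (simp add: lessThan_Suc_atMost)
      also have "\<dots> \<le> F \<omega>" by (rule lowsum) (rule inA)
      finally show ?thesis .
    next
      case False
      have "F \<omega> = \<infinity>"
      proof (rule ennreal_all_nat_top)
        fix N
        have "(of_nat N :: ennreal) = (\<Sum>k<N. 1)" by simp
        also have "\<dots> \<le> (\<Sum>k<N. of_nat (L k))" by (intro sum_mono) (use L1 in simp)
        also have "\<dots> \<le> F \<omega>" by (rule lowsum) (use False Amem in auto)
        finally show "of_nat N \<le> F \<omega>" .
      qed
      then show ?thesis by simp
    qed
  qed
  have "(\<integral>\<^sup>+\<omega>. luby_expansions \<omega> \<partial>?P) \<le> (\<integral>\<^sup>+\<omega>. F \<omega> \<partial>?P)"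
    by (rule nn_integral_mono) (rule pw)
  also have "\<dots> = (\<Sum>k. \<integral>\<^sup>+\<omega>. of_nat (L k) * indicator (A k) \<omega> + \<infinity> * indicator (B k) \<omega> \<partial>?P)"
    unfolding F_def by (rule nn_integral_suminf) (use Aset Bset in auto)
  also have "\<dots> = (\<Sum>k. of_nat (L k) * (\<Prod>j<k. emeasure (?M j) {x. \<not> fst x}))"
  proof (rule suminf_cong)
    fix k
    have "(\<integral>\<^sup>+\<omega>. of_nat (L k) * indicator (A k) \<omega> + \<infinity> * indicator (B k) \<omega> \<partial>?P)
        = (\<integral>\<^sup>+\<omega>. of_nat (L k) * indicator (A k) \<omega> \<partial>?P) + (\<integral>\<^sup>+\<omega>. \<infinity> * indicator (B k) \<omega> \<partial>?P)"
      by (rule nn_integral_add) (use Aset Bset in auto)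
    also have "\<dots> = of_nat (L k) * emeasure ?P (A k) + \<infinity> * emeasure ?P (B k)"
      using Aset Bset by (simp add: nn_integral_cmult_indicator)
    also have "\<dots> = of_nat (L k) * (\<Prod>j<k. emeasure (?M j) {x. \<not> fst x})"
      by (simp add: Ameas Bmeas)
    finally show "(\<integral>\<^sup>+\<omega>. of_nat (L k) * indicator (A k) \<omega> + \<infinity> * indicator (B k) \<omega> \<partial>?P)
        = of_nat (L k) * (\<Prod>j<k. emeasure (?M j) {x. \<not> fst x})" .
  qed
  finally show ?thesis .
qed

lemma trial_snd: "x \<in> set_pmf (trial_pmf T s0 G \<pi> D) \<Longrightarrow> snd x \<le> D"
proof -
  assume "x \<in> set_pmf (trial_pmf T s0 G \<pi> D)"
  then obtain m where x: "x = trial_outcome T s0 G D m" unfolding trial_pmf_def by auto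
  show ?thesis
  proof (cases "\<exists>i < D. node_state T s0 (take i m) \<in> G")
    case True
    then obtain i where i: "i < D" "node_state T s0 (take i m) \<in> G" by blast
    have "(LEAST i. node_state T s0 (take i m) \<in> G) \<le> i" by (rule Least_le) (rule i(2))
    then show ?thesis using x True i(1) unfolding trial_outcome_def by simp
  next
    case False then show ?thesis using x unfolding trial_outcome_def if_not_P[OF False] by simp
  qed
qed

lemma prod_bound:
  fixes x :: "nat \<Rightarrow> ennreal"
  assumes x1: "\<And>j. x j \<le> 1" and xr: "\<And>j. D dvd Suc j \<Longrightarrow> x j \<le> r" and D: "D > 0"
  shows "(\<Prod>j<k. x j) \<le> r ^ (k div D)"
proof (induction k)
  case 0 then show ?case by simp
next
  case (Suc k)
  show ?case
  proof (cases "D dvd Suc k")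
    case True
    then have "Suc k div D = Suc (k div D)" by (simp add: div_Suc dvd_eq_mod_eq_0)
    then have "r ^ (Suc k div D) = r ^ (k div D) * r" by (simp add: mult.commute)
    moreover have "(\<Prod>j<Suc k. x j) = (\<Prod>j<k. x j) * x k" by simp
    moreover have "(\<Prod>j<k. x j) * x k \<le> r ^ (k div D) * r"
      by (rule mult_mono) (use Suc.IH xr[OF True] in auto)
    ultimately show ?thesis by simp
  next
    case False
    then have "Suc k div D = k div D" by (simp add: div_Suc dvd_eq_mod_eq_0)
    moreover have "(\<Prod>j<Suc k. x j) = (\<Prod>j<k. x j) * x k" by simp
    moreover have "(\<Prod>j<k. x j) * x k \<le> r ^ (k div D) * 1"
      by (rule mult_mono) (use Suc.IH x1 in auto)
    ultimately show ?thesis by simp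
  qed
qed

lemma geom_tail:
  fixes p :: real
  assumes p0: "0 < p" and p1: "p \<le> 1"
  shows "(\<Sum>j. if i \<le> j then ennreal (p * (1 - p) ^ j) else 0) = ennreal ((1 - p) ^ i)"
proof -
  define g where "g j = (if i \<le> j then p * (1 - p) ^ j else 0)" for j
  have "(\<lambda>n. (1 - p) ^ n) sums (1 / (1 - (1 - p)))" by (rule geometric_sums) (use p0 p1 in auto)
  then have "(\<lambda>n. (p * (1 - p) ^ i) * (1 - p) ^ n) sums ((p * (1 - p) ^ i) * (1 / (1 - (1 - p))))"
    by (rule sums_mult)
  then have "(\<lambda>n. g (n + i)) sums ((1 - p) ^ i)" using p0 by (simp add: g_def power_add mult_ac)
  then have "g sums ((1 - p) ^ i + sum g {..<i})" by (simp add: sums_iff_shift)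
  moreover have "sum g {..<i} = 0" by (simp add: g_def)
  ultimately have gs: "g sums ((1 - p) ^ i)" by simp
  have "(\<Sum>j. if i \<le> j then ennreal (p * (1 - p) ^ j) else 0) = (\<Sum>j. ennreal (g j))"
    by (rule suminf_cong) (simp add: g_def)
  also have "\<dots> = ennreal (\<Sum>j. g j)"
  proof (rule suminf_ennreal2)
    show "summable g" using gs by (rule sums_summable)
    show "0 \<le> g j" for j using p0 p1 by (simp add: g_def)
  qed
  also have "\<dots> = ennreal ((1 - p) ^ i)" using gs by (simp add: sums_unique[symmetric])
  finally show ?thesis .
qed

lemma ennreal_suminf_swap:
  fixes f :: "nat \<Rightarrow> nat \<Rightarrow> ennreal"
  shows "(\<Sum>i. \<Sum>j. f i j) = (\<Sum>j. \<Sum>i. f i j)"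
proof -
  have "(\<Sum>i. \<Sum>j. f i j) = (\<Sum>i. \<integral>\<^sup>+j. f i j \<partial>count_space UNIV)"
    by (simp add: nn_integral_count_space_nat)
  also have "\<dots> = (\<integral>\<^sup>+j. (\<Sum>i. f i j) \<partial>count_space UNIV)"
    by (rule nn_integral_suminf[symmetric]) simp
  also have "\<dots> = (\<Sum>j. \<Sum>i. f i j)" by (simp add: nn_integral_count_space_nat)
  finally show ?thesis .
qed

lemma pot_step:
  fixes p a b n :: real
  assumes "p \<noteq> 0"
  shows "a * (n + (1 - p) / p) + b * (n ^ 2 + 2 * n * (1 - p) / p + (1 - p) * (1 + (1 - p)) / p ^ 2)
    = p * (a * n + b * n ^ 2) + (1 - p) * (a * ((n + 1) + (1 - p) / p)
       + b * ((n + 1) ^ 2 + 2 * (n + 1) * (1 - p) / p + (1 - p) * (1 + (1 - p)) / p ^ 2))"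
  using assms by (simp add: field_simps power2_eq_square)

lemma series_pot:
  fixes p a b :: real
  assumes p0: "0 < p" and p1: "p \<le> 1"
  defines "X \<equiv> \<lambda>n::real. a * (n + (1 - p) / p) + b * (n ^ 2 + 2 * n * (1 - p) / p + (1 - p) * (1 + (1 - p)) / p ^ 2)"
  defines "\<Phi> \<equiv> \<lambda>N::nat. (1 - p) ^ N * X (real N + 1)"
  shows "(\<Sum>j<N. p * (1 - p) ^ j * (a * (j + 1) + b * (j + 1) ^ 2)) + \<Phi> N = \<Phi> 0"
proof (induction N)
  case 0 then show ?case by simp
next
  case (Suc N)
  have X: "X (real N + 1) = p * (a * (real N + 1) + b * (real N + 1) ^ 2) + (1 - p) * X (real N + 1 + 1)"
    unfolding X_def by (rule pot_step) (use p0 in simp)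
  have "\<Phi> N = p * (1 - p) ^ N * (a * (N + 1) + b * (N + 1) ^ 2) + \<Phi> (Suc N)"
    unfolding \<Phi>_def by (subst X) (simp add: algebra_simps)
  then show ?case using Suc by simp
qed

lemma ln2_ge_half: "1 / 2 \<le> ln (2::real)"
proof -
  have "ln (1 / 2 :: real) \<le> 1 / 2 - 1" by (rule ln_le_minus_one) simp
  then show ?thesis by (simp add: ln_div)
qed

lemma log2_le_self: "0 < (x::real) \<Longrightarrow> log 2 x \<le> x"
proof -
  assume x: "0 < x"
  have l2: "0 < ln (2::real)" by simp
  have l21: "ln (2::real) \<le> 1" using ln_le_minus_one[of 2] by simp
  have "ln (x / 2) \<le> x / 2 - 1" by (rule ln_le_minus_one) (use x in simp)
  then have "ln x \<le> x / 2 - 1 + ln 2" using x by (simp add: ln_div)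
  also have "\<dots> \<le> x * ln 2"
  proof -
    have "x * (1 / 2 - ln 2) \<le> 0" using x ln2_ge_half by (simp add: mult_nonneg_nonpos)
    then show ?thesis using l21 by (simp add: algebra_simps)
  qed
  finally have "ln x \<le> x * ln 2" .
  then show ?thesis unfolding log_def using l2 by (simp add: divide_le_eq)
qed

lemma pow2_between: "1 \<le> (d::nat) \<Longrightarrow> \<exists>b. d \<le> 2 ^ b \<and> 2 ^ b \<le> 2 * d"
proof -
  assume d: "1 \<le> d"
  define b where "b = (LEAST b. d \<le> 2 ^ b)"
  have ex: "d \<le> 2 ^ d" using less_exp[of d] by simp
  have db: "d \<le> 2 ^ b" unfolding b_def by (rule LeastI[of _ d]) (rule ex)
  show ?thesis
  proof (cases b)
    case 0 then show ?thesis using db d by (intro exI[of _ b]) auto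
  next
    case (Suc c)
    have "\<not> d \<le> 2 ^ c" unfolding b_def
    proof
      assume "d \<le> 2 ^ c"
      then have "b \<le> c" unfolding b_def by (rule Least_le)
      then show False using Suc by simp
    qed
    then show ?thesis using db Suc by (intro exI[of _ b]) auto
  qed
qed

lemma lsum_nonneg: "0 \<le> lsum M"
  unfolding lsum_def by (simp add: sum_nonneg)

lemma series_final:
  fixes p :: real and D :: nat
  assumes p0: "0 < p" and p1: "p \<le> 1" and D1: "1 \<le> D"
  defines "a \<equiv> real D / 2 * (log 2 (real D / p) + 2)" and "bb \<equiv> real D * p / 2"
  shows "(\<Sum>j. ennreal (lsum (Suc j * D) * (p * (1 - p) ^ j)))
      \<le> ennreal (a / p + bb * (1 + (1 - p)) / p ^ 2)"
proof -
  define t where "t j = lsum (Suc j * D) * (p * (1 - p) ^ j)" for j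
  define X where "X \<equiv> \<lambda>n::real. a * (n + (1 - p) / p) + bb * (n ^ 2 + 2 * n * (1 - p) / p + (1 - p) * (1 + (1 - p)) / p ^ 2)"
  define \<Phi> where "\<Phi> \<equiv> \<lambda>N::nat. (1 - p) ^ N * X (real N + 1)"
  have Lnn: "0 \<le> log 2 (real D / p)" using p0 p1 D1 by (simp add: divide_le_eq)
  have a0: "0 \<le> a" unfolding a_def using Lnn by simp
  have b0: "0 \<le> bb" unfolding bb_def using p0 by simp
  have t0: "0 \<le> t j" for j unfolding t_def using p0 p1 by (simp add: lsum_nonneg)
  have tb: "t j \<le> p * (1 - p) ^ j * (a * (j + 1) + bb * (j + 1) ^ 2)" for j
  proof -
    define M where "M = real (Suc j * D)"
    have "1 \<le> Suc j * D" using D1 by simp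
    then have M0: "1 \<le> M" unfolding M_def by linarith
    have Meq: "M = ((j + 1) * p) * (real D / p)" unfolding M_def using p0 by (simp add: algebra_simps)
    have "log 2 M = log 2 ((j + 1) * p) + log 2 (real D / p)"
      unfolding Meq by (rule log_mult_pos) (use p0 D1 in auto)
    also have "\<dots> \<le> (j + 1) * p + log 2 (real D / p)"
      using log2_le_self[of "(j + 1) * p"] p0 by simp
    finally have lg: "log 2 M \<le> (j + 1) * p + log 2 (real D / p)" .
    have "lsum (Suc j * D) \<le> M / 2 * log 2 M + M" unfolding M_def by (rule lsum_bound) (use D1 in simp)
    also have "\<dots> \<le> M / 2 * ((j + 1) * p + log 2 (real D / p)) + M"
      using lg M0 by (simp add: mult_left_mono)
    also have "\<dots> = a * (j + 1) + bb * (j + 1) ^ 2"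
      unfolding a_def bb_def M_def by (simp add: field_simps power2_eq_square)
    finally have "lsum (Suc j * D) \<le> a * (j + 1) + bb * (j + 1) ^ 2" .
    then show ?thesis unfolding t_def using p0 p1
      by (simp add: mult_left_mono mult.commute mult.left_commute)
  qed
  have X0: "0 \<le> X n" if "0 \<le> n" for n
    unfolding X_def using that a0 b0 p0 p1 by (intro add_nonneg_nonneg mult_nonneg_nonneg) auto
  have part: "(\<Sum>j<N. t j) \<le> \<Phi> 0" for N
  proof -
    have "(\<Sum>j<N. t j) \<le> (\<Sum>j<N. p * (1 - p) ^ j * (a * (j + 1) + bb * (j + 1) ^ 2))"
      by (rule sum_mono) (rule tb)
    also have "\<dots> = \<Phi> 0 - \<Phi> N"
      using series_pot[OF p0 p1, of a bb N] unfolding \<Phi>_def X_def by simp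
    also have "\<dots> \<le> \<Phi> 0"
      unfolding \<Phi>_def using X0[of "real N + 1"] p1 by simp
    finally show ?thesis .
  qed
  have sm: "summable t" by (rule summableI_nonneg_bounded[OF t0 part])
  have "(\<Sum>j. ennreal (t j)) = ennreal (\<Sum>j. t j)" by (rule suminf_ennreal2[OF t0 sm])
  also have "\<dots> \<le> ennreal (\<Phi> 0)" by (rule ennreal_leI) (rule suminf_le_const[OF sm part])
  also have "\<Phi> 0 = a / p + bb * (1 + (1 - p)) / p ^ 2"
    unfolding \<Phi>_def X_def using p0 by (simp add: field_simps power2_eq_square)
  finally show ?thesis unfolding t_def .
qed

lemma final_ineq:
  fixes p :: real and d D :: nat
  assumes p0: "0 < p" and p1: "p \<le> 1" and d1: "1 \<le> d" and dD: "d \<le> D" and D2: "D \<le> 2 * d"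
  shows "real D / 2 * (log 2 (real D / p) + 2) / p + real D * p / 2 * (1 + (1 - p)) / p ^ 2
     \<le> real d + real d / p * (log 2 (real d / p) + 6.1)"
proof -
  define lam where "lam = log 2 (real d / p)"
  have l0: "0 \<le> lam" unfolding lam_def using p0 p1 d1 by (simp add: divide_le_eq)
  have "log 2 (real D / p) \<le> log 2 (2 * (real d / p))"
    using p0 d1 dD D2 by (subst log_le_cancel_iff) (auto simp: divide_right_mono)
  also have "\<dots> = log 2 2 + lam" unfolding lam_def by (rule log_mult_pos) (use p0 d1 in auto)
  also have "\<dots> = 1 + lam" by simp
  finally have lD: "log 2 (real D / p) \<le> 1 + lam" .
  have lDn: "0 \<le> log 2 (real D / p)" using p0 p1 d1 dD by (simp add: divide_le_eq)
  have h1: "real D / 2 * (log 2 (real D / p) + 2) / p \<le> real d / p * (lam + 3)"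
  proof -
    have "real D / 2 * (log 2 (real D / p) + 2) \<le> real d * (lam + 3)"
    proof (rule mult_mono)
      show "real D / 2 \<le> real d" using D2 by simp
      show "log 2 (real D / p) + 2 \<le> lam + 3" using lD by simp
    qed (use l0 lDn in auto)
    then have "real D / 2 * (log 2 (real D / p) + 2) / p \<le> real d * (lam + 3) / p"
      using p0 by (rule divide_right_mono[OF _ less_imp_le])
    then show ?thesis by simp
  qed
  have h2: "real D * p / 2 * (1 + (1 - p)) / p ^ 2 \<le> real d / p * 2"
  proof -
    have "real D * p / 2 * (1 + (1 - p)) / p ^ 2 = real D / 2 * (2 - p) / p"
      using p0 by (simp add: field_simps power2_eq_square)
    also have "\<dots> \<le> real d * 2 / p"
    proof (rule divide_right_mono)
      have "real D / 2 * (2 - p) \<le> real d * (2 - p)" using D2 p1 by (intro mult_right_mono) auto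
      also have "\<dots> \<le> real d * 2" by (rule mult_left_mono) (use p0 in auto)
      finally show "real D / 2 * (2 - p) \<le> real d * 2" .
    qed (use p0 in simp)
    finally show ?thesis by simp
  qed
  have "real d / p * (lam + 3) + real d / p * 2 \<le> real d + real d / p * (lam + 6.1)"
  proof -
    have "0 \<le> real d / p" using p0 by simp
    then have "real d / p * (lam + 3) + real d / p * 2 \<le> real d / p * (lam + 6.1)"
      by (simp add: algebra_simps)
    then show ?thesis by simp
  qed
  then show ?thesis using h1 h2 unfolding lam_def by linarith
qed

theorem theorem6:
  fixes T :: "'s \<Rightarrow> 'a::finite \<Rightarrow> 's" and s0 :: 's and G :: "'s set"
    and \<pi> :: "'a list \<Rightarrow> real"
  assumes "is_policy \<pi>"
  shows "\<forall>d::nat. d \<ge> 1 \<and> pi_plus T s0 G \<pi> d > 0 \<longrightarrow>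
    expected_luby_expansions T s0 G \<pi>
      \<le> ennreal (real d + real d / pi_plus T s0 G \<pi> d
                  * (log 2 (real d / pi_plus T s0 G \<pi> d) + 6.1))"
proof (intro allI impI)
  fix d :: nat
  assume dp: "d \<ge> 1 \<and> pi_plus T s0 G \<pi> d > 0"
  define p where "p = pi_plus T s0 G \<pi> d"
  have d1: "1 \<le> d" and p0: "0 < p" using dp unfolding p_def by auto
  have p1: "p \<le> 1"
  proof -
    have "measure_pmf.prob (trial_pmf T s0 G \<pi> d) {x. \<not> fst x} \<le> 1 - p"
      unfolding p_def by (rule trial_fail[OF assms order.refl d1])
    moreover have "0 \<le> measure_pmf.prob (trial_pmf T s0 G \<pi> d) {x. \<not> fst x}" by (rule measure_nonneg)
    ultimately show ?thesis by linarith
  qed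
  obtain b where db: "d \<le> 2 ^ b" and bd: "2 ^ b \<le> 2 * d" using pow2_between[OF d1] by blast
  define D :: nat where "D = 2 ^ b"
  have D0: "0 < D" "1 \<le> D" unfolding D_def by auto
  define r where "r = 1 - p"
  define Ms where "Ms j = trial_pmf T s0 G \<pi> (luby (Suc j))" for j
  define x where "x j = emeasure (measure_pmf (Ms j)) {x. \<not> fst x}" for j
  have x1: "x j \<le> 1" for j
    unfolding x_def by (rule prob_space.emeasure_le_1[OF prob_space_measure_pmf])
  have xr: "x j \<le> ennreal r" if "D dvd Suc j" for j
  proof -
    have "d \<le> luby (Suc j)" using luby_dvd[of b "Suc j"] that db unfolding D_def by simp
    then have "measure_pmf.prob (Ms j) {x. \<not> fst x} \<le> r"
      unfolding Ms_def r_def p_def by (rule trial_fail[OF assms _ d1])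
    then show ?thesis unfolding x_def measure_pmf.emeasure_eq_measure by (rule ennreal_leI)
  qed
  have "expected_luby_expansions T s0 G \<pi>
      = (\<integral>\<^sup>+\<omega>. luby_expansions \<omega> \<partial>(\<Pi>\<^sub>M j\<in>UNIV. measure_pmf (Ms j)))"
    unfolding expected_luby_expansions_def luby_space_def Ms_def ..
  also have "\<dots> \<le> (\<Sum>k. of_nat (luby (Suc k)) * (\<Prod>j<k. x j))"
    unfolding x_def by (rule step_A[OF luby_pos]) (auto simp: Ms_def intro: trial_snd)
  also have "\<dots> \<le> (\<Sum>k. of_nat (luby (Suc k)) * ennreal (r ^ (k div D)))"
  proof (rule suminf_le[OF _ summableI summableI])
    fix k
    have "(\<Prod>j<k. x j) \<le> ennreal r ^ (k div D)" by (rule prod_bound[OF x1 xr D0(1)])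
    also have "\<dots> = ennreal (r ^ (k div D))" using p1 unfolding r_def by (simp add: ennreal_power)
    finally show "of_nat (luby (Suc k)) * (\<Prod>j<k. x j) \<le> of_nat (luby (Suc k)) * ennreal (r ^ (k div D))"
      by (rule mult_left_mono) simp
  qed
  also have "\<dots> = (\<Sum>k. \<Sum>j. of_nat (luby (Suc k)) * (if k div D \<le> j then ennreal (p * r ^ j) else 0))"
    unfolding r_def using geom_tail[OF p0 p1] by simp
  also have "\<dots> = (\<Sum>j. \<Sum>k. of_nat (luby (Suc k)) * (if k div D \<le> j then ennreal (p * r ^ j) else 0))"
    by (rule ennreal_suminf_swap)
  also have "\<dots> = (\<Sum>j. ennreal (lsum (Suc j * D) * (p * (1 - p) ^ j)))"
  proof (rule suminf_cong)
    fix j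
    have "(\<Sum>k. of_nat (luby (Suc k)) * (if k div D \<le> j then ennreal (p * r ^ j) else 0))
        = (\<Sum>k<Suc j * D. of_nat (luby (Suc k)) * (if k div D \<le> j then ennreal (p * r ^ j) else 0))"
    proof (rule suminf_finite)
      show "finite {..<Suc j * D}" by simp
      show "of_nat (luby (Suc k)) * (if k div D \<le> j then ennreal (p * r ^ j) else 0) = 0"
        if "k \<notin> {..<Suc j * D}" for k
      proof -
        have "\<not> k div D < Suc j" using that D0 by (simp add: div_less_iff_less_mult)
        then show ?thesis by simp
      qed
    qed
    also have "\<dots> = (\<Sum>k<Suc j * D. ennreal (real (luby (Suc k)) * (p * r ^ j)))"
    proof (rule sum.cong[OF refl])
      fix k assume "k \<in> {..<Suc j * D}"
      then have "k div D \<le> j" using D0 by (simp add: div_less_iff_less_mult less_Suc_eq_le[symmetric])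
      then show "of_nat (luby (Suc k)) * (if k div D \<le> j then ennreal (p * r ^ j) else 0)
          = ennreal (real (luby (Suc k)) * (p * r ^ j))"
        using p0 p1 unfolding r_def by (simp add: ennreal_mult ennreal_of_nat_eq_real_of_nat)
    qed
    also have "\<dots> = ennreal (\<Sum>k<Suc j * D. real (luby (Suc k)) * (p * r ^ j))"
      using p0 p1 unfolding r_def by (intro sum_ennreal) simp
    also have "\<dots> = ennreal (lsum (Suc j * D) * (p * (1 - p) ^ j))"
      unfolding lsum_def r_def by (simp add: sum_distrib_right)
    finally show "(\<Sum>k. of_nat (luby (Suc k)) * (if k div D \<le> j then ennreal (p * r ^ j) else 0))
        = ennreal (lsum (Suc j * D) * (p * (1 - p) ^ j))" .
  qed
  also have "\<dots> \<le> ennreal (real D / 2 * (log 2 (real D / p) + 2) / p + real D * p / 2 * (1 + (1 - p)) / p ^ 2)"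
    by (rule series_final[OF p0 p1 D0(2)])
  also have "\<dots> \<le> ennreal (real d + real d / p * (log 2 (real d / p) + 6.1))"
    by (rule ennreal_leI, rule final_ineq[OF p0 p1 d1]) (use db bd in \<open>simp_all add: D_def\<close>)
  finally show "expected_luby_expansions T s0 G \<pi>
      \<le> ennreal (real d + real d / pi_plus T s0 G \<pi> d * (log 2 (real d / pi_plus T s0 G \<pi> d) + 6.1))"
    unfolding p_def .
qed

end
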